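(* Let $\mathbb{X}$ be a finite set, $\mathcal{H}_A$ a finite-dimensional Hilbert space, $\{\rho_A^x\}_{x\in\mathbb{X}}$ density operators on $\mathcal{H}_A$, and $\sim$ a neighbouring relationship on density operators such that $\rho_A^x\sim\rho_A^{x'}$ for all $x,x'\in\mathbb{X}$. Let $\mathcal{E}$ be a quantum channel that is $(\epsilon,0)$-differentially private with respect to $\sim$, for some $\epsilon\geq0$. Then, writing $\mathcal{E}(\rho_A)$ for the family $\{\mathcal{E}(\rho_A^x)\}_{x\in\mathbb{X}}$, \[ \mathcal{B}(X\rightarrow A)_{\mathcal{E}(\rho_A)}\leq\mathcal{R}(X\rightarrow A)_{\mathcal{E}(\rho_A)}\leq\epsilon/\ln(2). \]
   Context: All logarithms $\log$ are base 2; $\ln$ is the natural logarithm. A neighbouring relationship is a reflexive and symmetric relation $\sim$ on density operators. For $\epsilon,\delta\geq0$, a quantum channel $\mathcal{E}$ is $(\epsilon,\delta)$-differentially private (w.r.t. $\sim$) if $\operatorname{tr}(M\mathcal{E}(\rho))\leq e^{\epsilon}\operatorname{tr}(M\mathcal{E}(\sigma))+\delta$ for all operators $0\preceq M\preceq I$ and all $\rho\sim\sigma$. For a density operator $\rho$ and positive semi-definite $\sigma$, $\widetilde{D}_\infty(\rho\|\sigma)=\log\inf\{\mu\in\mathbb{R}:\rho\leq\mu\sigma\}$ ($+\infty$ if $\operatorname{supp}\rho\not\subseteq\operatorname{supp}\sigma$). For a family $\{\tau^x\}_{x\in\mathbb{X}}$ of density operators, $\mathcal{B}=\min_{\pi\in\Delta(\mathbb{X})}\max_x\widetilde{D}_\infty(\tau^x\|\sum_{x'}\pi(x')\tau^{x'})$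 (with $\Delta(\mathbb{X})$ the probability mass functions on $\mathbb{X}$) and $\mathcal{R}=\max_{x,x'}\widetilde{D}_\infty(\tau^x\|\tau^{x'})$. *)

theory Defs
  imports Complex_Main "Jordan_Normal_Form.Matrix" "HOL-Library.Extended_Real"
begin

text \<open>Operators on a d-dimensional Hilbert space are d x d complex matrices.\<close>

definition qtrace :: "complex mat \<Rightarrow> complex" where
  "qtrace A = (\<Sum>i<dim_row A. A $$ (i, i))"

definition qadj :: "complex mat \<Rightarrow> complex mat" where
  "qadj A = mat (dim_col A) (dim_row A) (\<lambda>(i, j). cnj (A $$ (j, i)))"

definition qform :: "complex mat \<Rightarrow> complex vec \<Rightarrow> complex" where
  "qform A v = (\<Sum>i<dim_row A. \<Sum>j<dim_col A. cnj (v $ i) * A $$ (i, j) * v $ j)"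

definition psd :: "nat \<Rightarrow> complex mat \<Rightarrow> bool" where
  "psd d A \<longleftrightarrow> A \<in> carrier_mat d d \<and> qadj A = A \<and>
     (\<forall>v \<in> carrier_vec d. 0 \<le> Re (qform A v))"

definition loewner_le :: "nat \<Rightarrow> complex mat \<Rightarrow> complex mat \<Rightarrow> bool" where
  "loewner_le d A B \<longleftrightarrow> A \<in> carrier_mat d d \<and> B \<in> carrier_mat d d \<and> psd d (B - A)"

definition density :: "nat \<Rightarrow> complex mat \<Rightarrow> bool" where
  "density d \<rho> \<longleftrightarrow> psd d \<rho> \<and> qtrace \<rho> = 1"

text \<open>(id_k \<otimes> E)(X) for X a (k*n) x (k*n) matrix, the ancilla being the first factor.\<close>
definition id_tensor :: "nat \<Rightarrow> nat \<Rightarrow> nat \<Rightarrow> (complex mat \<Rightarrow> complex mat) \<Rightarrow> complex mat \<Rightarrow> complex mat" where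
  "id_tensor k n m E X = mat (k * m) (k * m) (\<lambda>(i, j).
      E (mat n n (\<lambda>(p, q). X $$ ((i div m) * n + p, (j div m) * n + q))) $$ (i mod m, j mod m))"

definition quantum_channel :: "nat \<Rightarrow> nat \<Rightarrow> (complex mat \<Rightarrow> complex mat) \<Rightarrow> bool" where
  "quantum_channel n m E \<longleftrightarrow>
     (\<forall>A \<in> carrier_mat n n. E A \<in> carrier_mat m m) \<and>
     (\<forall>A \<in> carrier_mat n n. \<forall>B \<in> carrier_mat n n. E (A + B) = E A + E B) \<and>
     (\<forall>c. \<forall>A \<in> carrier_mat n n. E (c \<cdot>\<^sub>m A) = c \<cdot>\<^sub>m E A) \<and>
     (\<forall>k. \<forall>X. psd (k * n) X \<longrightarrow> psd (k * m) (id_tensor k n m E X)) \<and>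
     (\<forall>A \<in> carrier_mat n n. qtrace (E A) = qtrace A)"

definition neighbouring :: "nat \<Rightarrow> (complex mat \<Rightarrow> complex mat \<Rightarrow> bool) \<Rightarrow> bool" where
  "neighbouring n rel \<longleftrightarrow>
     (\<forall>\<rho>. density n \<rho> \<longrightarrow> rel \<rho> \<rho>) \<and>
     (\<forall>\<rho> \<sigma>. density n \<rho> \<longrightarrow> density n \<sigma> \<longrightarrow> rel \<rho> \<sigma> \<longrightarrow> rel \<sigma> \<rho>)"

definition diff_private ::
  "nat \<Rightarrow> nat \<Rightarrow> (complex mat \<Rightarrow> complex mat \<Rightarrow> bool) \<Rightarrow> (complex mat \<Rightarrow> complex mat) \<Rightarrow> real \<Rightarrow> real \<Rightarrow> bool" where
  "diff_private n m rel E \<epsilon> \<delta> \<longleftrightarrow>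
     (\<forall>M \<rho> \<sigma>. loewner_le m (0\<^sub>m m m) M \<longrightarrow> loewner_le m M (1\<^sub>m m) \<longrightarrow>
        density n \<rho> \<longrightarrow> density n \<sigma> \<longrightarrow> rel \<rho> \<sigma> \<longrightarrow>
        Re (qtrace (M * E \<rho>)) \<le> exp \<epsilon> * Re (qtrace (M * E \<sigma>)) + \<delta>)"

definition Dmax :: "nat \<Rightarrow> complex mat \<Rightarrow> complex mat \<Rightarrow> ereal" where
  "Dmax d \<rho> \<sigma> = (if \<exists>\<mu>::real. loewner_le d \<rho> (complex_of_real \<mu> \<cdot>\<^sub>m \<sigma>)
     then ereal (log 2 (Inf {\<mu>::real. loewner_le d \<rho> (complex_of_real \<mu> \<cdot>\<^sub>m \<sigma>)}))
     else \<infinity>)"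

definition pmfs_on :: "'x set \<Rightarrow> ('x \<Rightarrow> real) set" where
  "pmfs_on X = {\<pi>. (\<forall>x\<in>X. 0 \<le> \<pi> x) \<and> (\<Sum>x\<in>X. \<pi> x) = 1}"

definition mixture :: "nat \<Rightarrow> 'x set \<Rightarrow> ('x \<Rightarrow> real) \<Rightarrow> ('x \<Rightarrow> complex mat) \<Rightarrow> complex mat" where
  "mixture d X \<pi> \<tau> = mat d d (\<lambda>ij. \<Sum>x\<in>X. complex_of_real (\<pi> x) * \<tau> x $$ ij)"

definition B_quant :: "nat \<Rightarrow> 'x set \<Rightarrow> ('x \<Rightarrow> complex mat) \<Rightarrow> ereal" where
  "B_quant d X \<tau> = (INF \<pi> \<in> pmfs_on X. SUP x \<in> X. Dmax d (\<tau> x) (mixture d X \<pi> \<tau>))"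

definition R_quant :: "nat \<Rightarrow> 'x set \<Rightarrow> ('x \<Rightarrow> complex mat) \<Rightarrow> ereal" where
  "R_quant d X \<tau> = (SUP x \<in> X. SUP x' \<in> X. Dmax d (\<tau> x) (\<tau> x'))"

end

theory Submission
  imports Defs "HOL-Analysis.Convex"
begin
lemma E_psd:
  assumes qc: "quantum_channel n m E" and A: "psd n A"
  shows "psd m (E A)"
proof -
  have Ac: "A \<in> carrier_mat n n" using A by (simp add: psd_def)
  have EA: "E A \<in> carrier_mat m m" using qc Ac by (simp add: quantum_channel_def)
  have "\<forall>k X. psd (k * n) X \<longrightarrow> psd (k * m) (id_tensor k n m E X)" using qc by (simp add: quantum_channel_def)
  then have "psd (1 * m) (id_tensor 1 n m E A)" using A by (metis mult_1)
  moreover have "id_tensor 1 n m E A = E A"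
  proof -
    have "mat n n (\<lambda>(p, q). A $$ (p, q)) = A" using Ac by (intro eq_matI) auto
    then have "\<And>i j. i < m \<Longrightarrow> j < m \<Longrightarrow> mat n n (\<lambda>(p, q). A $$ ((i div m) * n + p, (j div m) * n + q)) = A"
      by simp
    then show ?thesis using EA unfolding id_tensor_def by (intro eq_matI) auto
  qed
  ultimately show ?thesis by simp
qed

lemma qform_unit:
  assumes "A \<in> carrier_mat d d" "i < d"
  shows "qform A (unit_vec d i) = A $$ (i, i)"
proof -
  have "qform A (unit_vec d i) = (\<Sum>k<d. \<Sum>l<d. (if k = i then 1 else 0) * A $$ (k, l) * (if l = i then 1 else 0))"
    using assms unfolding qform_def by (intro sum.cong refl) (auto simp: unit_vec_def)
  also have "\<dots> = (\<Sum>k<d. if k = i then A $$ (k, i) else 0)"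
  proof (intro sum.cong refl)
    fix k assume "k \<in> {..<d}"
    have m: "\<And>x::complex. \<And>P. x * (if P then 1 else 0) = (if P then x else 0)" by simp
    show "(\<Sum>l<d. (if k = i then 1 else 0) * A $$ (k, l) * (if l = i then 1 else 0)) = (if k = i then A $$ (k, i) else 0)"
      using assms(2) by (simp add: m)
  qed
  also have "\<dots> = A $$ (i, i)" using assms(2) by simp
  finally show ?thesis .
qed

lemma qtrace_psd_nonneg:
  assumes "psd d A" shows "0 \<le> Re (qtrace A)"
proof -
  have Ac: "A \<in> carrier_mat d d" using assms by (simp add: psd_def)
  have "Re (qtrace A) = (\<Sum>i<d. Re (qform A (unit_vec d i)))"
    using Ac by (simp add: qtrace_def qform_unit)
  also have "\<dots> \<ge> 0" using assms by (intro sum_nonneg) (auto simp: psd_def)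
  finally show ?thesis .
qed

lemma qtrace_lin:
  assumes "A \<in> carrier_mat d d" "B \<in> carrier_mat d d"
  shows "qtrace (c \<cdot>\<^sub>m A - B) = c * qtrace A - qtrace B"
  using assms by (simp add: qtrace_def sum_subtractf sum_distrib_left)

lemma qform_lin:
  assumes "A \<in> carrier_mat d d" "B \<in> carrier_mat d d"
  shows "qform (c \<cdot>\<^sub>m A - B) v = c * qform A v - qform B v"
proof -
  have "qform (c \<cdot>\<^sub>m A - B) v = (\<Sum>i<d. \<Sum>j<d. c * (cnj (v $ i) * A $$ (i, j) * v $ j) - cnj (v $ i) * B $$ (i, j) * v $ j)"
    using assms unfolding qform_def by (intro sum.cong refl) (auto simp: algebra_simps)
  then show ?thesis using assms by (simp add: qform_def sum_subtractf sum_distrib_left)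
qed

lemma qadj_lin:
  assumes "A \<in> carrier_mat d d" "B \<in> carrier_mat d d"
  shows "qadj (complex_of_real c \<cdot>\<^sub>m A - B) = complex_of_real c \<cdot>\<^sub>m qadj A - qadj B"
  using assms by (intro eq_matI) (auto simp: qadj_def)

definition proj :: "nat \<Rightarrow> real \<Rightarrow> complex vec \<Rightarrow> complex mat" where
  "proj m t v = mat m m (\<lambda>(i, j). complex_of_real t * v $ i * cnj (v $ j))"

lemma proj_carrier: "proj m t v \<in> carrier_mat m m" by (simp add: proj_def)

lemma proj_trace:
  assumes "B \<in> carrier_mat m m"
  shows "qtrace (proj m t v * B) = complex_of_real t * qform B v"
proof -
  have "qtrace (proj m t v * B) = (\<Sum>i<m. \<Sum>k<m. complex_of_real t * (cnj (v $ k) * B $$ (k, i) * v $ i))"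
    using assms unfolding qtrace_def
    by (intro sum.cong refl) (auto simp: proj_def scalar_prod_def lessThan_atLeast0 algebra_simps)
  also have "\<dots> = complex_of_real t * (\<Sum>k<m. \<Sum>i<m. cnj (v $ k) * B $$ (k, i) * v $ i)"
    by (subst sum.swap) (simp add: sum_distrib_left)
  also have "\<dots> = complex_of_real t * qform B v" using assms by (simp add: qform_def)
  finally show ?thesis .
qed

lemma proj_qform:
  "qform (proj m t v) w = complex_of_real t * cnj (\<Sum>j<m. cnj (v $ j) * w $ j) * (\<Sum>j<m. cnj (v $ j) * w $ j)"
proof -
  have "qform (proj m t v) w = (\<Sum>i<m. \<Sum>j<m. complex_of_real t * (cnj (w $ i) * v $ i) * (cnj (v $ j) * w $ j))"
    unfolding qform_def by (intro sum.cong refl) (auto simp: proj_def algebra_simps)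
  also have "\<dots> = (\<Sum>i<m. complex_of_real t * (cnj (w $ i) * v $ i)) * (\<Sum>j<m. cnj (v $ j) * w $ j)"
    by (simp only: sum_product)
  also have "\<dots> = complex_of_real t * (\<Sum>i<m. cnj (w $ i) * v $ i) * (\<Sum>j<m. cnj (v $ j) * w $ j)"
    by (simp add: sum_distrib_left)
  also have "(\<Sum>i<m. cnj (w $ i) * v $ i) = cnj (\<Sum>j<m. cnj (v $ j) * w $ j)"
    by (simp add: mult.commute)
  finally show ?thesis .
qed

lemma cnj_mult_self: "cnj z * z = complex_of_real ((cmod z)\<^sup>2)"
  by (metis complex_norm_square mult.commute of_real_power)

lemma proj_qform_re: "Re (qform (proj m t v) w) = t * (cmod (\<Sum>j<m. cnj (v $ j) * w $ j))\<^sup>2"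
  unfolding proj_qform mult.assoc cnj_mult_self by simp

lemma proj_psd:
  assumes "t \<ge> 0" shows "psd m (proj m t v)"
proof -
  have "qadj (proj m t v) = proj m t v" by (intro eq_matI) (auto simp: qadj_def proj_def)
  then show ?thesis unfolding psd_def using assms by (simp add: proj_carrier proj_qform_re)
qed

lemma qform_one: "Re (qform (1\<^sub>m m) w) = (\<Sum>i<m. (cmod (w $ i))\<^sup>2)"
proof -
  have "qform (1\<^sub>m m) w = (\<Sum>i<m. \<Sum>j<m. cnj (w $ i) * 1\<^sub>m m $$ (i, j) * w $ j)"
    by (simp add: qform_def)
  also have "\<dots> = (\<Sum>i<m. cnj (w $ i) * w $ i)"
  proof (intro sum.cong refl)
    fix i assume i: "i \<in> {..<m}"
    have m: "\<And>x y::complex. \<And>P. x * (if P then 1 else 0) * y = (if P then x * y else 0)" by simp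
    show "(\<Sum>j<m. cnj (w $ i) * 1\<^sub>m m $$ (i, j) * w $ j) = cnj (w $ i) * w $ i"
      using i by (simp add: one_mat_def m)
  qed
  finally show ?thesis by (simp add: cnj_mult_self)
qed

lemma cs_bound:
  "(cmod (\<Sum>j<m. cnj (v $ j) * w $ j))\<^sup>2 \<le> (\<Sum>j<m. (cmod (v $ j))\<^sup>2) * (\<Sum>j<m. (cmod (w $ j))\<^sup>2)"
proof -
  have "cmod (\<Sum>j<m. cnj (v $ j) * w $ j) \<le> (\<Sum>j<m. cmod (v $ j) * cmod (w $ j))"
    by (rule order_trans[OF norm_sum]) (simp add: norm_mult)
  then have "(cmod (\<Sum>j<m. cnj (v $ j) * w $ j))\<^sup>2 \<le> (\<Sum>j<m. cmod (v $ j) * cmod (w $ j))\<^sup>2"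
    by (simp add: power_mono)
  also have "\<dots> \<le> (\<Sum>j<m. (cmod (v $ j))\<^sup>2) * (\<Sum>j<m. (cmod (w $ j))\<^sup>2)"
    by (rule Cauchy_Schwarz_ineq_sum)
  finally show ?thesis .
qed

lemma proj_le1:
  assumes "t = 1 / (1 + (\<Sum>j<m. (cmod (v $ j))\<^sup>2))"
  shows "psd m (1\<^sub>m m - proj m t v)"
proof -
  let ?V = "\<Sum>j<m. (cmod (v $ j))\<^sup>2"
  have V0: "?V \<ge> 0" by (simp add: sum_nonneg)
  have t0: "t \<ge> 0" "t \<le> 1" using assms V0 by auto
  have "qadj (1\<^sub>m m - proj m t v) = 1\<^sub>m m - proj m t v"
    by (intro eq_matI) (auto simp: qadj_def proj_def one_mat_def)
  moreover have "0 \<le> Re (qform (1\<^sub>m m - proj m t v) w)" for w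
  proof -
    have "1 \<cdot>\<^sub>m 1\<^sub>m m = (1\<^sub>m m :: complex mat)" by (intro eq_matI) auto
    then have "qform (1\<^sub>m m - proj m t v) w = qform (1 \<cdot>\<^sub>m 1\<^sub>m m - proj m t v) w" by simp
    also have "\<dots> = qform (1\<^sub>m m) w - qform (proj m t v) w"
      using qform_lin[of "1\<^sub>m m" m "proj m t v" 1 w] by (simp add: proj_carrier)
    finally have e: "Re (qform (1\<^sub>m m - proj m t v) w) = (\<Sum>i<m. (cmod (w $ i))\<^sup>2) - t * (cmod (\<Sum>j<m. cnj (v $ j) * w $ j))\<^sup>2"
      by (simp add: qform_one proj_qform_re)
    let ?W = "\<Sum>i<m. (cmod (w $ i))\<^sup>2"
    have W0: "?W \<ge> 0" by (simp add: sum_nonneg)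
    have "t * (cmod (\<Sum>j<m. cnj (v $ j) * w $ j))\<^sup>2 \<le> t * (?V * ?W)"
      using cs_bound t0 by (simp add: mult_left_mono)
    also have "t * (?V * ?W) = (?V / (1 + ?V)) * ?W" using assms by simp
    also have "\<dots> \<le> 1 * ?W" using V0 W0 by (intro mult_right_mono) auto
    finally show ?thesis using e by simp
  qed
  moreover have "1\<^sub>m m - proj m t v \<in> carrier_mat m m" by (rule minus_carrier_mat[OF proj_carrier])
  ultimately show ?thesis unfolding psd_def by simp
qed

lemma E_density:
  assumes qc: "quantum_channel n m E" and d: "density n r"
  shows "density m (E r)"
proof -
  have rc: "r \<in> carrier_mat n n" using d by (simp add: density_def psd_def)
  have "qtrace (E r) = qtrace r" using qc rc by (simp add: quantum_channel_def)
  then show ?thesis using d E_psd[OF qc] by (simp add: density_def)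
qed

lemma dp_loewner:
  assumes qc: "quantum_channel n m E" and dp: "diff_private n m rel E \<epsilon> 0"
    and dr: "density n r" and ds: "density n s" and rl: "rel r s"
  shows "loewner_le m (E r) (complex_of_real (exp \<epsilon>) \<cdot>\<^sub>m E s)"
proof -
  let ?A = "E s" and ?B = "E r" and ?c = "complex_of_real (exp \<epsilon>)"
  have pA: "psd m ?A" and pB: "psd m ?B"
    using E_density[OF qc] dr ds by (auto simp: density_def)
  have Ac: "?A \<in> carrier_mat m m" and Bc: "?B \<in> carrier_mat m m"
    using pA pB by (auto simp: psd_def)
  have car: "?c \<cdot>\<^sub>m ?A - ?B \<in> carrier_mat m m" by (rule minus_carrier_mat[OF Bc])
  have adj: "qadj (?c \<cdot>\<^sub>m ?A - ?B) = ?c \<cdot>\<^sub>m ?A - ?B"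
    using qadj_lin[OF Ac Bc] pA pB by (simp add: psd_def)
  have "0 \<le> Re (qform (?c \<cdot>\<^sub>m ?A - ?B) v)" if v: "v \<in> carrier_vec m" for v
  proof -
    define t where "t = 1 / (1 + (\<Sum>j<m. (cmod (v $ j))\<^sup>2))"
    have V0: "(\<Sum>j<m. (cmod (v $ j))\<^sup>2) \<ge> 0" by (simp add: sum_nonneg)
    have t0: "t > 0" unfolding t_def using V0 by simp
    have "proj m t v - 0\<^sub>m m m = proj m t v"
      by (intro eq_matI) (auto simp: proj_def)
    then have l0: "loewner_le m (0\<^sub>m m m) (proj m t v)"
      using proj_psd[of t m v] t0 by (simp add: loewner_le_def proj_carrier)
    have l1: "loewner_le m (proj m t v) (1\<^sub>m m)"
      using proj_le1[OF t_def] by (simp add: loewner_le_def proj_carrier)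
    have "Re (qtrace (proj m t v * ?B)) \<le> exp \<epsilon> * Re (qtrace (proj m t v * ?A)) + 0"
      using dp l0 l1 dr ds rl unfolding diff_private_def by blast
    then have "t * Re (qform ?B v) \<le> exp \<epsilon> * (t * Re (qform ?A v))"
      using proj_trace[OF Ac] proj_trace[OF Bc] by simp
    then have "t * Re (qform ?B v) \<le> t * (exp \<epsilon> * Re (qform ?A v))" by (simp add: algebra_simps)
    then have "Re (qform ?B v) \<le> exp \<epsilon> * Re (qform ?A v)" using t0 by simp
    then show ?thesis using qform_lin[OF Ac Bc] by simp
  qed
  then have "psd m (?c \<cdot>\<^sub>m ?A - ?B)" using car adj by (simp add: psd_def)
  then show ?thesis using Bc Ac by (simp add: loewner_le_def)
qed

lemma Dmax_le:
  assumes dr: "density m r" and ds: "density m s" and c: "c > 0"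
    and le: "loewner_le m r (complex_of_real c \<cdot>\<^sub>m s)"
  shows "Dmax m r s \<le> ereal (log 2 c)"
proof -
  define S where "S = {\<mu>::real. loewner_le m r (complex_of_real \<mu> \<cdot>\<^sub>m s)}"
  have rc: "r \<in> carrier_mat m m" and sc: "s \<in> carrier_mat m m"
    using dr ds by (auto simp: density_def psd_def)
  have cS: "c \<in> S" using le by (simp add: S_def)
  have ge1: "\<mu> \<ge> 1" if "\<mu> \<in> S" for \<mu>
  proof -
    have "psd m (complex_of_real \<mu> \<cdot>\<^sub>m s - r)" using that by (simp add: S_def loewner_le_def)
    then have "0 \<le> Re (qtrace (complex_of_real \<mu> \<cdot>\<^sub>m s - r))" by (rule qtrace_psd_nonneg)
    also have "qtrace (complex_of_real \<mu> \<cdot>\<^sub>m s - r) = complex_of_real \<mu> - 1"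
      using qtrace_lin[OF sc rc] dr ds by (simp add: density_def)
    finally show ?thesis by simp
  qed
  have bdd: "bdd_below S" using ge1 by (intro bdd_belowI) auto
  have i1: "Inf S \<le> c" using cInf_lower[OF cS bdd] .
  have i2: "1 \<le> Inf S" using cS ge1 by (intro cInf_greatest) auto
  have "log 2 (Inf S) \<le> log 2 c" using i1 i2 by simp
  moreover have "\<exists>\<mu>::real. loewner_le m r (complex_of_real \<mu> \<cdot>\<^sub>m s)" using le by blast
  ultimately show ?thesis unfolding Dmax_def S_def by simp
qed

theorem proposition6:
  fixes n m :: nat and X :: "'x set" and \<rho> :: "'x \<Rightarrow> complex mat"
    and rel :: "complex mat \<Rightarrow> complex mat \<Rightarrow> bool"
    and E :: "complex mat \<Rightarrow> complex mat" and \<epsilon> :: real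
  assumes "finite X" and "X \<noteq> {}"
    and "\<forall>x\<in>X. density n (\<rho> x)"
    and "neighbouring n rel"
    and "\<forall>x\<in>X. \<forall>x'\<in>X. rel (\<rho> x) (\<rho> x')"
    and "quantum_channel n m E"
    and "\<epsilon> \<ge> 0"
    and "diff_private n m rel E \<epsilon> 0"
  shows "B_quant m X (\<lambda>x. E (\<rho> x)) \<le> R_quant m X (\<lambda>x. E (\<rho> x))
    \<and> R_quant m X (\<lambda>x. E (\<rho> x)) \<le> ereal (\<epsilon> / ln 2)"
proof
  let ?\<tau> = "\<lambda>x. E (\<rho> x)"
  have dens: "density m (?\<tau> x)" if "x \<in> X" for x
    using E_density[OF assms(6)] assms(3) that by blast
  obtain x0 where x0: "x0 \<in> X" using assms(2) by blast
  define \<pi> where "\<pi> = (\<lambda>x. if x = x0 then 1 else (0::real))"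
  have pi: "\<pi> \<in> pmfs_on X" using assms(1) x0 by (simp add: pmfs_on_def \<pi>_def)
  have x0c: "?\<tau> x0 \<in> carrier_mat m m" using dens[OF x0] by (simp add: density_def psd_def)
  have mix: "mixture m X \<pi> ?\<tau> = ?\<tau> x0"
  proof (intro eq_matI)
    fix i j assume "i < dim_row (?\<tau> x0)" "j < dim_col (?\<tau> x0)"
    then have ij: "i < m" "j < m" using x0c by auto
    have "(\<Sum>x\<in>X. complex_of_real (\<pi> x) * ?\<tau> x $$ (i, j)) = (\<Sum>x\<in>X. if x = x0 then ?\<tau> x $$ (i, j) else 0)"
      by (intro sum.cong refl) (simp add: \<pi>_def)
    also have "\<dots> = ?\<tau> x0 $$ (i, j)" using assms(1) x0 by simp
    finally show "mixture m X \<pi> ?\<tau> $$ (i, j) = ?\<tau> x0 $$ (i, j)"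
      using ij by (simp add: mixture_def)
  qed (use x0c in \<open>auto simp: mixture_def\<close>)
  have "B_quant m X ?\<tau> \<le> (SUP x \<in> X. Dmax m (?\<tau> x) (mixture m X \<pi> ?\<tau>))"
    unfolding B_quant_def by (rule INF_lower[OF pi])
  also have "\<dots> = (SUP x \<in> X. Dmax m (?\<tau> x) (?\<tau> x0))" by (simp add: mix)
  also have "\<dots> \<le> R_quant m X ?\<tau>"
    unfolding R_quant_def by (intro SUP_mono) (use x0 in \<open>auto intro: SUP_upper\<close>)
  finally show "B_quant m X ?\<tau> \<le> R_quant m X ?\<tau>" .
next
  let ?\<tau> = "\<lambda>x. E (\<rho> x)"
  have "Dmax m (?\<tau> x) (?\<tau> x') \<le> ereal (\<epsilon> / ln 2)" if "x \<in> X" "x' \<in> X" for x x'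
  proof -
    have le: "loewner_le m (?\<tau> x) (complex_of_real (exp \<epsilon>) \<cdot>\<^sub>m ?\<tau> x')"
      using dp_loewner[OF assms(6) assms(8)] assms(3,5) that by blast
    have "Dmax m (?\<tau> x) (?\<tau> x') \<le> ereal (log 2 (exp \<epsilon>))"
      using assms(3) that by (intro Dmax_le[OF _ _ exp_gt_zero le] E_density[OF assms(6)]) auto
    also have "log 2 (exp \<epsilon>) = \<epsilon> / ln 2" by (simp add: log_def)
    finally show ?thesis .
  qed
  then show "R_quant m X ?\<tau> \<le> ereal (\<epsilon> / ln 2)"
    unfolding R_quant_def by (intro SUP_least) auto
qed

end
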